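(* Consider the production planning setting described in the context, in the non-overlapping case, with the continuous budgeted scenario set $\mathcal{U}^c$ (budget $\Gamma^c\ge 0$). Fix $\pmb{x}\in\mathbb{X}$ with $X_t=\sum_{i\in[t]}x_i$. Then the optimal value of the adversarial problem $\max_{\pmb{D}\in\mathcal{U}^c}\sum_{t\in[T]}\max\{f_I(X_t,D_t),f_B(X_t,D_t)\}$ equals the optimal value of $$\max\ \sum_{t\in[T]}\max\{f_I(X_t,\widehat{D}_t-\delta_t),\,f_B(X_t,\widehat{D}_t+\delta_t)\}\quad\text{s.t.}\quad\sum_{t\in[T]}\delta_t\le\Gamma^c,\ \ 0\le\delta_t\le\Delta_t\ (t\in[T]).$$
   Context: There are $T\ge 1$ periods, $[T]=\{1,\dots,T\}$. Given are a production cost $c^P$, an inventory cost $c^I$, a backordering cost $c^B$ and a selling price $b^P$ (independent of the period), and a set $\mathbb{X}\subseteq\mathbb{R}^T_+$ of feasible production plans $\pmb{x}=(x_1,\dots,x_T)$ described by finitely many linear constraints. For a plan write $X_t=\sum_{i\in[t]}x_i$. For $t\in[T-1]$ let $f_I(X_t,D_t)=c^I(X_t-D_t)$ and $f_B(X_t,D_t)=c^B(D_t-X_t)$; for $t=T$ let $f_I(X_T,D_T)=c^I(X_T-D_T)+c^PX_T-b^PD_T$ and $f_B(X_T,D_T)=c^B(D_T-X_T)+c^PX_T-b^PX_T$. Nominal cumulative demands $\widehat{D}_t\ge 0$ satisfy $\widehat{D}_t\le\widehat{D}_{t+1}$, and deviations satisfy $0\le\Delta_t\le\widehat{D}_t$.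 The continuous budgeted scenario set is $\mathcal{U}^c=\{\pmb{D}\in\mathbb{R}^T: D_t\le D_{t+1}\ (t\in[T-1]),\ D_t\in[\widehat{D}_t-\Delta_t,\widehat{D}_t+\Delta_t]\ (t\in[T]),\ \sum_{t\in[T]}|D_t-\widehat{D}_t|\le\Gamma^c\}$ with $\Gamma^c\in\mathbb{R}_+$. The non-overlapping case means $\widehat{D}_t+\Delta_t\le\widehat{D}_{t+1}-\Delta_{t+1}$ for all $t\in[T-1]$. *)

theory Defs
  imports Complex_Main
begin

text \<open>Periods are 1..T. Cost functions; the last period T additionally carries
  production cost and selling revenue.\<close>

definition f_I :: "real \<Rightarrow> real \<Rightarrow> real \<Rightarrow> nat \<Rightarrow> nat \<Rightarrow> real \<Rightarrow> real \<Rightarrow> real" where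
  "f_I cP cI bP T t X D =
     (if t = T then cI * (X - D) + cP * X - bP * D else cI * (X - D))"

definition f_B :: "real \<Rightarrow> real \<Rightarrow> real \<Rightarrow> nat \<Rightarrow> nat \<Rightarrow> real \<Rightarrow> real \<Rightarrow> real" where
  "f_B cP cB bP T t X D =
     (if t = T then cB * (D - X) + cP * X - bP * X else cB * (D - X))"

definition cumul :: "(nat \<Rightarrow> real) \<Rightarrow> nat \<Rightarrow> real" where
  "cumul x t = (\<Sum>i=1..t. x i)"

definition Uc :: "nat \<Rightarrow> (nat \<Rightarrow> real) \<Rightarrow> (nat \<Rightarrow> real) \<Rightarrow> real \<Rightarrow> (nat \<Rightarrow> real) set" where
  "Uc T Dhat Delta Gamma = {D.
     (\<forall>t\<in>{1..<T}. D t \<le> D (t+1)) \<and>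
     (\<forall>t\<in>{1..T}. Dhat t - Delta t \<le> D t \<and> D t \<le> Dhat t + Delta t) \<and>
     (\<Sum>t=1..T. \<bar>D t - Dhat t\<bar>) \<le> Gamma}"

definition Dev :: "nat \<Rightarrow> (nat \<Rightarrow> real) \<Rightarrow> real \<Rightarrow> (nat \<Rightarrow> real) set" where
  "Dev T Delta Gamma = {\<delta>.
     (\<Sum>t=1..T. \<delta> t) \<le> Gamma \<and> (\<forall>t\<in>{1..T}. 0 \<le> \<delta> t \<and> \<delta> t \<le> Delta t)}"

end

theory Submission
  imports Defs
begin

lemma fI_anti:
  assumes "cI \<ge> 0" "bP \<ge> 0" "D1 \<le> D2"
  shows "f_I cP cI bP T t X D2 \<le> f_I cP cI bP T t X D1"
proof -
  have "cI * D1 \<le> cI * D2" "bP * D1 \<le> bP * D2" using assms by (auto intro: mult_left_mono)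
  then show ?thesis unfolding f_I_def by (auto simp: algebra_simps)
qed

lemma fB_mono:
  assumes "cB \<ge> 0" "D1 \<le> D2"
  shows "f_B cP cB bP T t X D1 \<le> f_B cP cB bP T t X D2"
proof -
  have "cB * D1 \<le> cB * D2" using assms by (auto intro: mult_left_mono)
  then show ?thesis unfolding f_B_def by (auto simp: algebra_simps)
qed

theorem lemma4:
  fixes T :: nat and cP cI cB bP Gamma :: real
    and x Dhat Delta :: "nat \<Rightarrow> real"
  assumes "T \<ge> 1"
    and "cP \<ge> 0" "cI \<ge> 0" "cB \<ge> 0" "bP \<ge> 0"
    and "Gamma \<ge> 0"
    and "\<forall>t\<in>{1..T}. x t \<ge> 0"
    and "\<forall>t\<in>{1..T}. Dhat t \<ge> 0"
    and "\<forall>t\<in>{1..<T}. Dhat t \<le> Dhat (t+1)"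
    and "\<forall>t\<in>{1..T}. 0 \<le> Delta t \<and> Delta t \<le> Dhat t"
    and "\<forall>t\<in>{1..<T}. Dhat t + Delta t \<le> Dhat (t+1) - Delta (t+1)"
  shows "(SUP D\<in>Uc T Dhat Delta Gamma.
            \<Sum>t=1..T. max (f_I cP cI bP T t (cumul x t) (D t))
                            (f_B cP cB bP T t (cumul x t) (D t)))
       = (SUP \<delta>\<in>Dev T Delta Gamma.
            \<Sum>t=1..T. max (f_I cP cI bP T t (cumul x t) (Dhat t - \<delta> t))
                            (f_B cP cB bP T t (cumul x t) (Dhat t + \<delta> t)))"
proof -
  define FI where "FI t d = f_I cP cI bP T t (cumul x t) d" for t d
  define FB where "FB t d = f_B cP cB bP T t (cumul x t) d" for t d
  define g where "g D = (\<Sum>t=1..T. max (FI t (D t)) (FB t (D t)))" for D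
  define h where "h \<delta> = (\<Sum>t=1..T. max (FI t (Dhat t - \<delta> t)) (FB t (Dhat t + \<delta> t)))" for \<delta>
  have FIa: "d1 \<le> d2 \<Longrightarrow> FI t d2 \<le> FI t d1" for t d1 d2
    unfolding FI_def using fI_anti assms by blast
  have FBm: "d1 \<le> d2 \<Longrightarrow> FB t d1 \<le> FB t d2" for t d1 d2
    unfolding FB_def using fB_mono assms by blast
  have LR: "\<exists>\<delta>\<in>Dev T Delta Gamma. g D \<le> h \<delta>" if D: "D \<in> Uc T Dhat Delta Gamma" for D
  proof
    let ?\<delta> = "\<lambda>t. \<bar>D t - Dhat t\<bar>"
    show "?\<delta> \<in> Dev T Delta Gamma" using D unfolding Uc_def Dev_def by auto
    show "g D \<le> h ?\<delta>" unfolding g_def h_def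
    proof (rule sum_mono)
      fix t
      show "max (FI t (D t)) (FB t (D t)) \<le> max (FI t (Dhat t - ?\<delta> t)) (FB t (Dhat t + ?\<delta> t))"
      proof (cases "D t \<le> Dhat t")
        case True
        then have "Dhat t - ?\<delta> t = D t" "D t \<le> Dhat t + ?\<delta> t" by auto
        then show ?thesis using FBm[of "D t" "Dhat t + ?\<delta> t" t] by auto
      next
        case False
        then have "Dhat t + ?\<delta> t = D t" "Dhat t - ?\<delta> t \<le> D t" by auto
        then show ?thesis using FIa[of "Dhat t - ?\<delta> t" "D t" t] by auto
      qed
    qed
  qed
  have RL: "\<exists>D\<in>Uc T Dhat Delta Gamma. h \<delta> \<le> g D" if d: "\<delta> \<in> Dev T Delta Gamma" for \<delta>
  proof
    define D where "D t = (if FB t (Dhat t + \<delta> t) \<le> FI t (Dhat t - \<delta> t) then Dhat t - \<delta> t else Dhat t + \<delta> t)" for t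
    have dd: "0 \<le> \<delta> t \<and> \<delta> t \<le> Delta t" if "t \<in> {1..T}" for t using d that unfolding Dev_def by auto
    have Db: "Dhat t - Delta t \<le> D t \<and> D t \<le> Dhat t + Delta t" if "t \<in> {1..T}" for t
      using dd[OF that] unfolding D_def by auto
    have Dabs: "\<bar>D t - Dhat t\<bar> = \<delta> t" if "t \<in> {1..T}" for t
      using dd[OF that] unfolding D_def by auto
    have mono: "D t \<le> D (t+1)" if "t \<in> {1..<T}" for t
    proof -
      have "t \<in> {1..T}" "t+1 \<in> {1..T}" using that by auto
      then show ?thesis using Db[of t] Db[of "t+1"] assms(11) that by fastforce
    qed
    have "(\<Sum>t=1..T. \<bar>D t - Dhat t\<bar>) = (\<Sum>t=1..T. \<delta> t)" using Dabs by (rule sum.cong[OF refl])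
    then show "D \<in> Uc T Dhat Delta Gamma" using d mono Db unfolding Uc_def Dev_def by auto
    show "h \<delta> \<le> g D" unfolding g_def h_def
      by (rule sum_mono) (auto simp: D_def)
  qed
  have hb: "h \<delta> \<le> (\<Sum>t=1..T. max (FI t (Dhat t - Delta t)) (FB t (Dhat t + Delta t)))"
    if d: "\<delta> \<in> Dev T Delta Gamma" for \<delta>
    unfolding h_def
  proof (rule sum_mono)
    fix t assume "t \<in> {1..T}"
    then have "\<delta> t \<le> Delta t" using d unfolding Dev_def by auto
    then show "max (FI t (Dhat t - \<delta> t)) (FB t (Dhat t + \<delta> t))
      \<le> max (FI t (Dhat t - Delta t)) (FB t (Dhat t + Delta t))"
      using FIa[of "Dhat t - Delta t" "Dhat t - \<delta> t" t] FBm[of "Dhat t + \<delta> t" "Dhat t + Delta t" t]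
      by auto
  qed
  have bh: "bdd_above (h ` Dev T Delta Gamma)" by (rule bdd_aboveI2, rule hb)
  have bg: "bdd_above (g ` Uc T Dhat Delta Gamma)"
  proof (rule bdd_aboveI2)
    fix D assume "D \<in> Uc T Dhat Delta Gamma"
    then obtain \<delta> where "\<delta> \<in> Dev T Delta Gamma" "g D \<le> h \<delta>" using LR by blast
    then show "g D \<le> (\<Sum>t=1..T. max (FI t (Dhat t - Delta t)) (FB t (Dhat t + Delta t)))"
      using hb by (meson order_trans)
  qed
  have ne1: "Dhat \<in> Uc T Dhat Delta Gamma" using assms unfolding Uc_def by auto
  have ne2: "(\<lambda>_. 0) \<in> Dev T Delta Gamma" using assms unfolding Dev_def by auto
  have "(SUP D\<in>Uc T Dhat Delta Gamma. g D) = (SUP \<delta>\<in>Dev T Delta Gamma. h \<delta>)"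
  proof (rule antisym)
    show "(SUP D\<in>Uc T Dhat Delta Gamma. g D) \<le> (SUP \<delta>\<in>Dev T Delta Gamma. h \<delta>)"
      by (rule cSUP_mono) (use ne1 bh LR in auto)
    show "(SUP \<delta>\<in>Dev T Delta Gamma. h \<delta>) \<le> (SUP D\<in>Uc T Dhat Delta Gamma. g D)"
      by (rule cSUP_mono) (use ne2 bg RL in auto)
  qed
  then show ?thesis unfolding g_def h_def FI_def FB_def .
qed

end
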